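(* Let $v>0$, $N\ge2$, and consider the Becker–Döring coagulation process $CP(N)$ with rates $\psi(1,1)=2v$, $\psi(i,1)=\psi(1,i)=iv$ for $i>1$, and $\psi(i,j)=0$ if $\min\{i,j\}>1$, started from $(N,0,\dots,0)$. Then its distribution is Gibbsian, $\mathbb P(X_N^{(\rho)}(t)=\eta)=N!\prod_{k=1}^N a_{k,N}(t)^{n_k}/n_k!$, with $$a_{k,N}(t)=\sum_{i=0}^k m_{i,k}\,e^{-i(N-1)vt},\qquad k=1,\dots,N,\ t\ge0,$$ where $m_{k-1,k}=0$ for $k\ge1$, $m_{k,k}=\dfrac{(-1)^{k-1}}{k(N-1)^{k-1}}$ for $k\ge1$, and $m_{i,k}=\dfrac{(-1)^i(k-1)!}{i!\,(N-1)^{k-1}(k-i)(k-i-2)!}$ for $0\le i\le k-2$. Equivalently the coefficients satisfy $m_{0,1}=0$, $m_{1,1}=1$, $m_{i,k}=-\frac{(k-1)m_{i-1,k-1}}{i(N-1)}$ for $1\le i\le k$, $k\ge2$, and $m_{0,k}=-\sum_{i=1}^k m_{i,k}$.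
   Context: $CP(N)$ is the continuous-time Markov chain on partitions $\eta=(n_1,\dots,n_N)$ of $N$ ($n_k$ = number of clusters of size $k$, $\sum kn_k=N$) in which any two distinct clusters of sizes $i,j$ merge into one of size $i+j$ at rate $\psi(i,j)$; the transition $\eta\to\eta^{(i,j)}$ has rate $n_in_j\psi(i,j)$ for $i\ne j$ and $\frac{n_i(n_i-1)}2\psi(i,i)$ for $i=j$. These rates are of the form $\psi(i,j)=if(j)+jf(i)$ with $f(1)=v$, $f(i)=0$ for $i>1$. *)

theory Defs
  imports "HOL-Analysis.Analysis"
begin

text \<open>A partition eta of N is encoded as eta :: nat => nat, eta k = n_k = number
of clusters of size k; n_k = 0 outside 1..N and sum k*n_k = N.\<close>
definition partitions :: "nat \<Rightarrow> (nat \<Rightarrow> nat) set" where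
  "partitions N = {eta. (\<forall>k. eta k \<noteq> 0 \<longrightarrow> 1 \<le> k \<and> k \<le> N) \<and> (\<Sum>k=1..N. k * eta k) = N}"

definition merge :: "nat \<Rightarrow> nat \<Rightarrow> (nat \<Rightarrow> nat) \<Rightarrow> (nat \<Rightarrow> nat)" where
  "merge i j eta = (\<lambda>k. eta k - (if k = i then 1 else 0) - (if k = j then 1 else 0)
                       + (if k = i + j then 1 else 0))"

text \<open>Rate of the transition eta -> eta^(i,j) (unordered pair, i <= j).\<close>
definition trans_rate :: "(nat \<Rightarrow> nat \<Rightarrow> real) \<Rightarrow> nat \<Rightarrow> nat \<Rightarrow> (nat \<Rightarrow> nat) \<Rightarrow> real" where
  "trans_rate psi i j eta =
     (if i = j then real (eta i) * (real (eta i) - 1) / 2 * psi i i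
      else real (eta i) * real (eta j) * psi i j)"

definition forward_rhs :: "nat \<Rightarrow> (nat \<Rightarrow> nat \<Rightarrow> real) \<Rightarrow> ((nat \<Rightarrow> nat) \<Rightarrow> real) \<Rightarrow> (nat \<Rightarrow> nat) \<Rightarrow> real" where
  "forward_rhs N psi q eta =
     (\<Sum>xi\<in>partitions N. \<Sum>i\<in>{1..N}. \<Sum>j\<in>{i..N}.
        (if merge i j xi = eta then trans_rate psi i j xi * q xi else 0))
   - (\<Sum>i\<in>{1..N}. \<Sum>j\<in>{i..N}. trans_rate psi i j eta) * q eta"

text \<open>p : time -> state -> probability is the law of CP(N) started from (N,0,...,0):
the (unique, finite state space) solution of the forward equation with that initial law.\<close>
definition is_CP_law :: "nat \<Rightarrow> (nat \<Rightarrow> nat \<Rightarrow> real) \<Rightarrow> (real \<Rightarrow> (nat \<Rightarrow> nat) \<Rightarrow> real) \<Rightarrow> bool" where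
  "is_CP_law N psi p \<longleftrightarrow>
     (\<forall>eta\<in>partitions N. p 0 eta = (if eta = (\<lambda>k. if k = 1 then N else 0) then 1 else 0)) \<and>
     (\<forall>eta\<in>partitions N. \<forall>t\<ge>0.
        ((\<lambda>s. p s eta) has_real_derivative forward_rhs N psi (p t) eta) (at t within {0..}))"

definition psi_BD :: "real \<Rightarrow> nat \<Rightarrow> nat \<Rightarrow> real" where
  "psi_BD v i j = (if i = 1 \<and> j = 1 then 2 * v
                   else if j = 1 then real i * v
                   else if i = 1 then real j * v else 0)"

definition mcoef :: "nat \<Rightarrow> nat \<Rightarrow> nat \<Rightarrow> real" where
  "mcoef N i k =
    (if i = k then (-1) ^ (k - 1) / (real k * (real N - 1) ^ (k - 1))
     else if i + 1 = k then 0
     else if i + 2 \<le> k then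
       (-1) ^ i * fact (k - 1) /
         (fact i * (real N - 1) ^ (k - 1) * real (k - i) * fact (k - i - 2))
     else 0)"

definition acoef :: "nat \<Rightarrow> real \<Rightarrow> nat \<Rightarrow> real \<Rightarrow> real" where
  "acoef N v k t = (\<Sum>i=0..k. mcoef N i k * exp (- real i * (real N - 1) * v * t))"

end

theory Submission
  imports Defs
begin


lemma mcoef_rec:
  assumes N: "N \<ge> 2" and k: "k \<ge> 2" and i: "1 \<le> i" "i \<le> k"
  shows "mcoef N i k = - (real (k - 1) * mcoef N (i - 1) (k - 1)) / (real i * (real N - 1))"
proof -
  have N1: "real N - 1 > 0" using N by simp
  obtain m where m: "k = Suc (Suc m)" using k by (metis add_2_eq_Suc le_Suc_ex)
  obtain j where j: "i = Suc j" using i by (cases i) auto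
  consider "i = k" | "i + 1 = k" | "i + 2 \<le> k" using i by linarith
  then show ?thesis
  proof cases
    case 1
    have gen: "x > 0 \<Longrightarrow> (-1::real)^(Suc m) / (real (Suc (Suc m)) * x^(Suc m))
       = - (real (Suc m) * ((-1)^m / (real (Suc m) * x^m))) / (real (Suc (Suc m)) * x)" for x :: real
      by (simp add: power_Suc divide_simps del: of_nat_Suc)
    from 1 have "j = Suc m" using m j by simp
    then show ?thesis using N1 gen[of "real N - 1"] unfolding m j mcoef_def
      by simp
  next
    case 2
    then show ?thesis using N1 unfolding m j mcoef_def by auto
  next
    case 3
    then have jm: "j + 2 \<le> Suc m" using m j by simp
    define x where "x = real N - 1"
    have x: "x > 0" using N1 x_def by simp
    define D where "D = real (Suc m - j)"
    define G where "G = (fact (m - j - 1) :: real)"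
    have D: "D > 0" using jm by (simp add: D_def)
    have G: "G > 0" by (simp add: G_def)
    have L: "mcoef N i k = (-1)^(Suc j) * (real (Suc m) * fact m) / (real (Suc j) * fact j * (x * x^m) * D * G)"
      unfolding mcoef_def m j x_def D_def G_def using jm
      by (simp add: algebra_simps numeral_2_eq_2)
    have R: "mcoef N (i - 1) (k - 1) = (-1)^j * fact m / (fact j * x^m * D * G)"
      unfolding mcoef_def m j x_def D_def G_def using jm
      by (simp add: algebra_simps numeral_2_eq_2)
    have gen: "(-1::real)^(Suc j) * (real (Suc m) * F) / (real (Suc j) * A * (x * x^m) * D * G)
       = - (real (Suc m) * ((-1)^j * F / (A * x^m * D * G))) / (real (Suc j) * x)"
      if "A > 0" for A F :: real using x D G that by (simp add: divide_simps)
    show ?thesis unfolding L R using gen[of "fact j" "fact m"] by (simp add: m j x_def)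
  qed
qed

lemma alt_binom:
  fixes c :: real
  assumes "c > 0"
  shows "(\<Sum>j\<le>m. (-1)^j * real (m choose j) / (c + real j)) = fact m / (\<Prod>j\<le>m. (c + real j))"
  using assms
proof (induction m arbitrary: c)
  case 0
  then show ?case by simp
next
  case (Suc m)
  define g where "g = (\<lambda>j. (-1)^j * real (m choose j) / (c + real j))"
  have A: "(\<Sum>j\<le>m. g (Suc j)) = (\<Sum>j\<le>m. g j) - 1 / c"
  proof -
    have "(\<Sum>j\<le>Suc m. g j) = g 0 + (\<Sum>j\<le>m. g (Suc j))" by (rule sum.atMost_Suc_shift)
    moreover have "(\<Sum>j\<le>Suc m. g j) = (\<Sum>j\<le>m. g j)" by (simp add: g_def)
    ultimately show ?thesis by (simp add: g_def)
  qed
  have "(\<Sum>j\<le>Suc m. (-1)^j * real (Suc m choose j) / (c + real j))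
      = 1 / c + (\<Sum>j\<le>m. (-1)^(Suc j) * real (Suc m choose Suc j) / (c + real (Suc j)))"
    by (subst sum.atMost_Suc_shift) simp
  also have "(\<Sum>j\<le>m. (-1)^(Suc j) * real (Suc m choose Suc j) / (c + real (Suc j)))
      = - (\<Sum>j\<le>m. (-1)^j * real (m choose j) / ((c + 1) + real j)) + (\<Sum>j\<le>m. g (Suc j))"
  proof -
    have "(\<Sum>j\<le>m. (-1)^(Suc j) * real (Suc m choose Suc j) / (c + real (Suc j)))
       = (\<Sum>j\<le>m. - ((-1)^j * real (m choose j) / ((c + 1) + real j)) + g (Suc j))"
      by (rule sum.cong) (simp_all add: g_def diff_divide_distrib add.assoc distrib_left add_divide_distrib)
    also have "\<dots> = - (\<Sum>j\<le>m. (-1)^j * real (m choose j) / ((c + 1) + real j)) + (\<Sum>j\<le>m. g (Suc j))"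
      by (simp add: sum.distrib sum_negf sum_subtractf)
    finally show ?thesis .
  qed
  finally have S: "(\<Sum>j\<le>Suc m. (-1)^j * real (Suc m choose j) / (c + real j))
      = (\<Sum>j\<le>m. g j) - (\<Sum>j\<le>m. (-1)^j * real (m choose j) / ((c + 1) + real j))"
    using A by simp
  define PA where "PA = (\<Prod>j\<le>m. (c + real j))"
  define PB where "PB = (\<Prod>j\<le>m. ((c+1) + real j))"
  have PA: "PA > 0" unfolding PA_def using Suc.prems by (intro prod_pos) auto
  have PB: "PB > 0" unfolding PB_def using Suc.prems by (intro prod_pos) auto
  have E1: "(\<Prod>j\<le>Suc m. (c + real j)) = PA * (c + real (Suc m))" unfolding PA_def by simp
  have E2: "(\<Prod>j\<le>Suc m. (c + real j)) = c * PB" unfolding PB_def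
    by (subst prod.atMost_Suc_shift) (simp add: add_ac)
  have IH1: "(\<Sum>j\<le>m. g j) = fact m / PA" unfolding g_def PA_def using Suc by simp
  have IH2: "(\<Sum>j\<le>m. (-1)^j * real (m choose j) / ((c + 1) + real j)) = fact m / PB"
    unfolding PB_def using Suc by simp
  have key: "PA * (c + real (Suc m)) = c * PB" using E1 E2 by argo
  have "fact m / PA - fact m / PB = fact (Suc m) / (PA * (c + real (Suc m)))"
  proof -
    have "fact m / PA - fact m / PB = fact m * (PB - PA) / (PA * PB)" using PA PB by (simp add: field_simps)
    also have "\<dots> = fact (Suc m) / (PA * (c + real (Suc m)))"
    proof -
      have k2: "(PB - PA) * (c + real (Suc m)) = real (Suc m) * PB" using key by (simp add: algebra_simps)
      have cp: "c + real (Suc m) > 0" using Suc.prems by simp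
      show ?thesis using PA PB cp k2 by (simp add: divide_simps)
    qed
    finally show ?thesis .
  qed
  then show ?case unfolding S IH1 IH2 E1 .
qed

lemma prod_two_fact: "(\<Prod>j\<le>m. (2 + real j)) = fact (m + 2)"
  by (induction m) (simp_all add: algebra_simps)

lemma mcoef_sum0:
  assumes N: "N \<ge> 2" and k: "k \<ge> 2"
  shows "(\<Sum>i=0..k. mcoef N i k) = 0"
proof -
  obtain m where m: "k = Suc (Suc m)" using k by (metis add_2_eq_Suc le_Suc_ex)
  define x where "x = real N - 1"
  have x: "x > 0" using N x_def by simp
  have T: "mcoef N i k = (real (Suc m) / x ^ Suc m) * ((-1)^i * real (m choose i) / real (m + 2 - i))"
    if i: "i \<le> m" for i
  proof -
    have b: "real (m choose i) = fact m / (fact i * fact (m - i))" using i by (rule binomial_fact)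
    have e: "Suc (Suc m) - i - 2 = m - i" by simp
    have "mcoef N i k = (-1)^i * fact (Suc m) / (fact i * x ^ Suc m * real (m + 2 - i) * fact (m - i))"
      unfolding mcoef_def m x_def e using i by simp
    then show ?thesis unfolding b using x by (simp add: field_simps)
  qed
  have S1: "(\<Sum>i\<le>m. (-1)^i * real (m choose i) / real (m + 2 - i))
        = (\<Sum>j\<le>m. (-1)^m * ((-1)^j * real (m choose j) / (2 + real j)))"
  proof -
    have "(\<Sum>i\<le>m. (-1)^i * real (m choose i) / real (m + 2 - i))
        = (\<Sum>i=0..m. (-1)^i * real (m choose i) / real (m + 2 - i))" by (simp add: atLeast0AtMost)
    also have "\<dots> = (\<Sum>j=0..m. (-1)^(m - j) * real (m choose (m - j)) / real (m + 2 - (m - j)))"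
      by (subst sum.atLeastAtMost_rev) simp
    also have "\<dots> = (\<Sum>j=0..m. (-1)^m * ((-1)^j * real (m choose j) / (2 + real j)))"
    proof (rule sum.cong)
      fix j assume "j \<in> {0..m}"
      then have j: "j \<le> m" by simp
      have p: "(-1::real)^(m - j) = (-1)^m * (-1)^j"
      proof -
        have "(-1::real)^m * (-1)^j = (-1)^(m + j)" by (simp add: power_add)
        also have "m + j = (m - j) + 2 * j" using j by simp
        also have "(-1::real)^((m - j) + 2 * j) = (-1)^(m-j)" by (simp add: power_add power_mult)
        finally show ?thesis by simp
      qed
      have c: "m choose (m - j) = m choose j" using j by (rule binomial_symmetric[symmetric])
      have d: "real (m + 2 - (m - j)) = 2 + real j" using j by simp
      show "(-1)^(m - j) * real (m choose (m - j)) / real (m + 2 - (m - j)) = (-1)^m * ((-1)^j * real (m choose j) / (2 + real j))"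
        unfolding p c d by simp
    qed simp
    finally show ?thesis by (simp add: atLeast0AtMost)
  qed
  have S2: "(\<Sum>j\<le>m. (-1)^j * real (m choose j) / (2 + real j)) = fact m / fact (m + 2)"
    using alt_binom[of 2 m] prod_two_fact[of m] by simp
  have "(\<Sum>i=0..k. mcoef N i k) = (\<Sum>i\<le>m. mcoef N i k) + mcoef N (Suc m) k + mcoef N (Suc (Suc m)) k"
    unfolding m by (simp add: atLeast0AtMost)
  also have "(\<Sum>i\<le>m. mcoef N i k) = (real (Suc m) / x ^ Suc m) * ((-1)^m * (fact m / fact (m + 2)))"
  proof -
    have "(\<Sum>i\<le>m. mcoef N i k) = (\<Sum>i\<le>m. (real (Suc m) / x ^ Suc m) * ((-1)^i * real (m choose i) / real (m + 2 - i)))"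
      by (rule sum.cong[OF refl]) (rule T, simp)
    also have "\<dots> = (real (Suc m) / x ^ Suc m) * (\<Sum>i\<le>m. (-1)^i * real (m choose i) / real (m + 2 - i))"
      by (rule sum_distrib_left[symmetric])
    also have "(\<Sum>i\<le>m. (-1)^i * real (m choose i) / real (m + 2 - i)) = (-1)^m * (fact m / fact (m + 2))"
      unfolding S1 sum_distrib_left[symmetric] S2 ..
    finally show ?thesis .
  qed
  also have "mcoef N (Suc m) k = 0" unfolding mcoef_def m by simp
  also have "mcoef N (Suc (Suc m)) k = (-1)^(Suc m) / (real (Suc (Suc m)) * x ^ Suc m)"
    unfolding mcoef_def m x_def by simp
  finally have F: "(\<Sum>i=0..k. mcoef N i k) = real (Suc m) / x ^ Suc m * ((-1)^m * (fact m / fact (m + 2))) + 0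
     + (-1)^(Suc m) / (real (Suc (Suc m)) * x ^ Suc m)" .
  have f: "fact (m + 2) = real (Suc (Suc m)) * (real (Suc m) * fact m)"
    by (simp add: numeral_2_eq_2 del: of_nat_Suc)
  have fm: "(fact m :: real) > 0" by simp
  have "real (Suc m) / x ^ Suc m * ((-1)^m * (fact m / fact (m + 2))) = (-1)^m / (real (Suc (Suc m)) * x ^ Suc m)"
    unfolding f using fm x by (simp add: divide_simps del: of_nat_Suc)
  then show ?thesis unfolding F by simp
qed




lemma acoef_1: "acoef N v 1 t = exp (- (real N - 1) * v * t)"
  unfolding acoef_def by (simp add: mcoef_def algebra_simps)

lemma acoef_0: "N \<ge> 2 \<Longrightarrow> k \<ge> 2 \<Longrightarrow> acoef N v k 0 = 0"
  unfolding acoef_def using mcoef_sum0 by simp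

lemma acoef_deriv_gen:
  "((acoef N v k) has_real_derivative
     (\<Sum>i=0..k. mcoef N i k * (- real i * (real N - 1) * v * exp (- real i * (real N - 1) * v * t)))) (at t within S)"
  unfolding acoef_def
  by (auto intro!: derivative_eq_intros simp: algebra_simps)

lemma acoef_deriv1:
  "((acoef N v 1) has_real_derivative (- (real N - 1) * v * acoef N v 1 t)) (at t within S)"
  unfolding acoef_1 by (auto intro!: derivative_eq_intros simp: algebra_simps)

lemma acoef_deriv:
  assumes N: "N \<ge> 2" and k: "k \<ge> 2"
  shows "((acoef N v k) has_real_derivative (v * real (k - 1) * acoef N v 1 t * acoef N v (k - 1) t)) (at t within S)"
proof -
  obtain m where m: "k = Suc m" using k by (cases k) auto
  have N1: "real N - 1 > 0" using N by simp
  define e where "e = (\<lambda>i::nat. exp (- real i * (real N - 1) * v * t))"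
  have eS: "e (Suc i) = exp (- (real N - 1) * v * t) * e i" for i
    unfolding e_def by (simp add: exp_add[symmetric] algebra_simps)
  have "(\<Sum>i=0..k. mcoef N i k * (- real i * (real N - 1) * v * e i))
      = (\<Sum>i=0..m. mcoef N (Suc i) k * (- real (Suc i) * (real N - 1) * v * e (Suc i)))"
    unfolding m by (subst sum.atLeast0_atMost_Suc_shift) (simp add: algebra_simps)
  also have "\<dots> = (\<Sum>i=0..m. v * real m * exp (- (real N - 1) * v * t) * (mcoef N i m * e i))"
  proof (rule sum.cong[OF refl])
    fix i assume i: "i \<in> {0..m}"
    have r: "mcoef N (Suc i) k = - (real m * mcoef N i m) / (real (Suc i) * (real N - 1))"
      using mcoef_rec[OF N k, of "Suc i"] i m by simp
    show "mcoef N (Suc i) k * (- real (Suc i) * (real N - 1) * v * e (Suc i)) =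
          v * real m * exp (- (real N - 1) * v * t) * (mcoef N i m * e i)"
      unfolding r eS using N1 by (simp add: field_simps del: of_nat_Suc)
  qed
  also have "\<dots> = v * real m * exp (- (real N - 1) * v * t) * acoef N v m t"
    unfolding acoef_def e_def by (simp add: sum_distrib_left)
  finally have eq: "(\<Sum>i=0..k. mcoef N i k * (- real i * (real N - 1) * v * e i))
      = v * real (k - 1) * acoef N v 1 t * acoef N v (k - 1) t"
    unfolding acoef_1 m by simp
  show ?thesis using acoef_deriv_gen[of N v k t S] by (simp only: eq[unfolded e_def])
qed




lemma partitions_iff: "eta \<in> partitions N \<longleftrightarrow> (\<forall>k. eta k \<noteq> 0 \<longrightarrow> 1 \<le> k \<and> k \<le> N) \<and> (\<Sum>k=1..N. k * eta k) = N"
  by (simp add: partitions_def)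

lemma partitions_supp: "eta \<in> partitions N \<Longrightarrow> eta k \<noteq> 0 \<Longrightarrow> 1 \<le> k \<and> k \<le> N"
  unfolding partitions_iff by blast

lemma partitions_sum: "eta \<in> partitions N \<Longrightarrow> (\<Sum>k=1..N. k * eta k) = N"
  unfolding partitions_iff by blast

lemma partitions_bound:
  assumes "eta \<in> partitions N" shows "eta k \<le> N"
proof (cases "eta k = 0")
  case False
  then have k: "1 \<le> k" "k \<le> N" using assms unfolding partitions_def by auto
  have "k * eta k \<le> (\<Sum>k=1..N. k * eta k)" using k by (intro member_le_sum) auto
  also have "\<dots> = N" using assms unfolding partitions_def by auto
  finally have "k * eta k \<le> N" .
  moreover have "eta k \<le> k * eta k" using k by simp
  ultimately show ?thesis by linarith
qed simp

lemma finite_partitions: "finite (partitions N)"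
proof -
  have "partitions N \<subseteq> {f. \<forall>x. (x \<in> {1..N} \<longrightarrow> f x \<in> {0..N}) \<and> (x \<notin> {1..N} \<longrightarrow> f x = 0)}"
  proof
    fix eta assume e: "eta \<in> partitions N"
    have "\<forall>x. (x \<in> {1..N} \<longrightarrow> eta x \<in> {0..N}) \<and> (x \<notin> {1..N} \<longrightarrow> eta x = 0)"
    proof (intro allI conjI impI)
      fix x show "eta x \<in> {0..N}" using partitions_bound[OF e] by simp
      assume "x \<notin> {1..N}" then show "eta x = 0" using e unfolding partitions_def by auto
    qed
    then show "eta \<in> {f. \<forall>x. (x \<in> {1..N} \<longrightarrow> f x \<in> {0..N}) \<and> (x \<notin> {1..N} \<longrightarrow> f x = 0)}" by simp
  qed
  moreover have "finite {f. \<forall>x. (x \<in> {1..N} \<longrightarrow> f x \<in> {0..N}) \<and> (x \<notin> {1..N} \<longrightarrow> (f::nat\<Rightarrow>nat) x = 0)}"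
    by (rule finite_set_of_finite_funs) auto
  ultimately show ?thesis by (rule finite_subset)
qed

lemma partitions_sum_real:
  assumes "eta \<in> partitions N"
  shows "(\<Sum>k=1..N. real k * real (eta k)) = real N"
proof -
  have "(\<Sum>k=1..N. k * eta k) = N" using assms unfolding partitions_def by auto
  then have "real (\<Sum>k=1..N. k * eta k) = real N" by simp
  then show ?thesis by simp
qed

lemma psi_BD_zero: "2 \<le> i \<Longrightarrow> i \<le> j \<Longrightarrow> psi_BD v i j = 0"
  unfolding psi_BD_def by auto

lemma trans_rate_zero: "2 \<le> i \<Longrightarrow> i \<le> j \<Longrightarrow> trans_rate (psi_BD v) i j eta = 0"
  unfolding trans_rate_def using psi_BD_zero by auto

lemma outflow:
  assumes eta: "eta \<in> partitions N" and N: "N \<ge> 2"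
  shows "(\<Sum>i\<in>{1..N}. \<Sum>j\<in>{i..N}. trans_rate (psi_BD v) i j eta) = v * real (eta 1) * (real N - 1)"
proof -
  have s1: "(\<Sum>i\<in>{1..N}. \<Sum>j\<in>{i..N}. trans_rate (psi_BD v) i j eta)
       = (\<Sum>j\<in>{1..N}. trans_rate (psi_BD v) 1 j eta) + (\<Sum>i\<in>{Suc 1..N}. \<Sum>j\<in>{i..N}. trans_rate (psi_BD v) i j eta)"
    using N by (subst sum.atLeast_Suc_atMost) auto
  have s2: "(\<Sum>i\<in>{Suc 1..N}. \<Sum>j\<in>{i..N}. trans_rate (psi_BD v) i j eta) = 0"
    by (intro sum.neutral ballI) (auto intro: trans_rate_zero)
  have s3: "(\<Sum>j\<in>{1..N}. trans_rate (psi_BD v) 1 j eta)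
       = trans_rate (psi_BD v) 1 1 eta + (\<Sum>j\<in>{Suc 1..N}. trans_rate (psi_BD v) 1 j eta)"
    using N by (subst sum.atLeast_Suc_atMost) auto
  have s4: "(\<Sum>j\<in>{Suc 1..N}. trans_rate (psi_BD v) 1 j eta)
       = v * real (eta 1) * (\<Sum>j\<in>{Suc 1..N}. real j * real (eta j))"
    unfolding sum_distrib_left
    by (rule sum.cong[OF refl]) (auto simp: trans_rate_def psi_BD_def)
  have s5: "(\<Sum>j\<in>{Suc 1..N}. real j * real (eta j)) = real N - real (eta 1)"
    using partitions_sum_real[OF eta] N by (subst (asm) sum.atLeast_Suc_atMost) auto
  have s6: "trans_rate (psi_BD v) 1 1 eta = real (eta 1) * (real (eta 1) - 1) * v"
    by (simp add: trans_rate_def psi_BD_def)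
  show ?thesis unfolding s1 s2 s3 s4 s5 s6 by (simp add: algebra_simps)
qed

definition xi0 :: "nat \<Rightarrow> (nat \<Rightarrow> nat) \<Rightarrow> (nat \<Rightarrow> nat)" where
  "xi0 j eta = (\<lambda>k. eta k + (if k = 1 then 1 else 0) + (if k = j then 1 else 0) - (if k = j + 1 then 1 else 0))"

lemma merge_xi0: "1 \<le> j \<Longrightarrow> 1 \<le> eta (j + 1) \<Longrightarrow> merge 1 j (xi0 j eta) = eta"
  unfolding merge_def xi0_def fun_eq_iff by auto

lemma xi0_unique:
  assumes j: "1 \<le> j" and m: "merge 1 j xi = eta" and v: "v > 0"
    and tr: "trans_rate (psi_BD v) 1 j xi \<noteq> 0"
  shows "xi = xi0 j eta \<and> 1 \<le> eta (j + 1)"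
proof -
  have c: "(j = 1 \<and> xi 1 \<ge> 2) \<or> (j \<ge> 2 \<and> xi 1 \<ge> 1 \<and> xi j \<ge> 1)"
  proof (cases "j = 1")
    case True
    then have "real (xi 1) * (real (xi 1) - 1) \<noteq> 0" using tr by (auto simp: trans_rate_def psi_BD_def)
    then have "xi 1 \<noteq> 0" "xi 1 \<noteq> 1" by auto
    then show ?thesis using True by auto
  next
    case False
    then show ?thesis using tr j by (auto simp: trans_rate_def psi_BD_def)
  qed
  have mk: "eta k = xi k - (if k = 1 then 1 else 0) - (if k = j then 1 else 0) + (if k = 1 + j then 1 else 0)" for k
    using fun_cong[OF m, of k] j unfolding merge_def by auto
  have e1: "1 \<le> eta (j + 1)" using mk[of "j+1"] j by simp
  have "xi k = xi0 j eta k" for k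
    unfolding xi0_def mk using c j by (cases "k = 1"; cases "k = j"; cases "k = j + 1") auto
  then show ?thesis using e1 by auto
qed

lemma xi0_in:
  assumes eta: "eta \<in> partitions N" and j: "1 \<le> j" and e: "1 \<le> eta (j + 1)"
  shows "xi0 j eta \<in> partitions N"
proof -
  have "eta (j + 1) \<noteq> 0" using e by simp
  then have jN: "j + 1 \<le> N" using partitions_supp[OF eta] by blast
  have supp: "\<forall>k. xi0 j eta k \<noteq> 0 \<longrightarrow> 1 \<le> k \<and> k \<le> N"
  proof (intro allI impI)
    fix k assume "xi0 j eta k \<noteq> 0"
    then have "eta k \<noteq> 0 \<or> k = 1 \<or> k = j" unfolding xi0_def by (auto split: if_splits)
    then show "1 \<le> k \<and> k \<le> N" using partitions_supp[OF eta, of k] jN j by auto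
  qed
  have ix: "int (xi0 j eta k) = int (eta k) + (if k = 1 then 1 else 0) + (if k = j then 1 else 0) - (if k = j + 1 then 1 else 0)" for k
  proof (cases "k = j + 1")
    case True
    then have "k \<noteq> 1" "k \<noteq> j" using j by auto
    then show ?thesis using True e unfolding xi0_def by (simp add: of_nat_diff)
  next
    case False
    then show ?thesis unfolding xi0_def by simp
  qed
  have tm: "int k * int (xi0 j eta k) = int k * int (eta k) + (if k = 1 then int k else 0) + (if k = j then int k else 0) - (if k = j + 1 then int k else 0)" for k
    unfolding ix by (simp add: algebra_simps)
  have "int (\<Sum>k=1..N. k * xi0 j eta k) = (\<Sum>k=1..N. int k * int (xi0 j eta k))" by simp
  also have "\<dots> = (\<Sum>k=1..N. int k * int (eta k)) + (\<Sum>k=1..N. if k = 1 then int k else 0)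
     + (\<Sum>k=1..N. if k = j then int k else 0) - (\<Sum>k=1..N. if k = j + 1 then int k else 0)"
    unfolding tm by (simp only: sum.distrib sum_subtractf)
  also have "\<dots> = int N"
  proof -
    have "(\<Sum>k=1..N. k * eta k) = N" using partitions_sum[OF eta] .
    then have "int (\<Sum>k=1..N. k * eta k) = int N" by simp
    then have "(\<Sum>k=1..N. int k * int (eta k)) = int N" by simp
    moreover have "(\<Sum>k=1..N. if k = 1 then int k else 0) = 1" using jN by (subst sum.delta) auto
    moreover have "(\<Sum>k=1..N. if k = j then int k else 0) = int j" using jN j by (subst sum.delta) auto
    moreover have "(\<Sum>k=1..N. if k = j + 1 then int k else 0) = int j + 1" using jN j by (subst sum.delta) auto
    ultimately show ?thesis by simp
  qed
  finally have "int (\<Sum>k=1..N. k * xi0 j eta k) = int N" .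
  then have "(\<Sum>k=1..N. k * xi0 j eta k) = N" by (simp only: of_nat_eq_iff)
  then show ?thesis using supp unfolding partitions_iff by blast
qed

lemma inflow_j:
  assumes eta: "eta \<in> partitions N" and j: "1 \<le> j" and v: "v > 0"
  shows "(\<Sum>xi\<in>partitions N. if merge 1 j xi = eta then trans_rate (psi_BD v) 1 j xi * q xi else 0)
       = (if 1 \<le> eta (j + 1) then trans_rate (psi_BD v) 1 j (xi0 j eta) * q (xi0 j eta) else 0)"
proof -
  have h: "(if merge 1 j xi = eta then trans_rate (psi_BD v) 1 j xi * q xi else 0)
      = (if xi = xi0 j eta then (if 1 \<le> eta (j + 1) then trans_rate (psi_BD v) 1 j (xi0 j eta) * q (xi0 j eta) else 0) else 0)" for xi
  proof (cases "trans_rate (psi_BD v) 1 j xi = 0")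
    case True
    then show ?thesis by auto
  next
    case False
    show ?thesis
    proof (cases "merge 1 j xi = eta")
      case True
      then show ?thesis using xi0_unique[OF j True v False] by auto
    next
      case mF: False
      then show ?thesis using merge_xi0[OF j] by auto
    qed
  qed
  show ?thesis unfolding h using finite_partitions xi0_in[OF eta j] by (auto simp: sum.delta)
qed




definition gq :: "nat \<Rightarrow> real \<Rightarrow> real \<Rightarrow> (nat \<Rightarrow> nat) \<Rightarrow> real" where
  "gq N v t eta = fact N * (\<Prod>k=1..N. acoef N v k t ^ eta k / fact (eta k))"

definition dA :: "nat \<Rightarrow> real \<Rightarrow> nat \<Rightarrow> real \<Rightarrow> real" where
  "dA N v k t = (if k = 1 then - (real N - 1) * v * acoef N v 1 t
                 else v * real (k - 1) * acoef N v 1 t * acoef N v (k - 1) t)"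

lemma acoef_deriv_all:
  assumes "N \<ge> 2" "k \<ge> 1"
  shows "(acoef N v k has_real_derivative dA N v k t) (at t within S)"
proof (cases "k = 1")
  case True then show ?thesis unfolding dA_def using acoef_deriv1 by simp
next
  case False then show ?thesis unfolding dA_def using acoef_deriv[of N k v t S] assms by simp
qed

definition gT :: "nat \<Rightarrow> real \<Rightarrow> real \<Rightarrow> (nat \<Rightarrow> nat) \<Rightarrow> nat \<Rightarrow> real" where
  "gT N v t eta k = (of_nat (eta k) * (dA N v k t * acoef N v k t ^ (eta k - Suc 0)) / fact (eta k))
      * (\<Prod>l\<in>{1..N}-{k}. acoef N v l t ^ eta l / fact (eta l))"

lemma gq_deriv:
  assumes N: "N \<ge> 2"
  shows "((\<lambda>s. gq N v s eta) has_real_derivative fact N * (\<Sum>k\<in>{1..N}. gT N v t eta k)) (at t within S)"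
proof -
  have "((\<lambda>s. \<Prod>k\<in>{1..N}. acoef N v k s ^ eta k / fact (eta k)) has_real_derivative
      (\<Sum>k\<in>{1..N}. (of_nat (eta k) * (dA N v k t * acoef N v k t ^ (eta k - Suc 0)) / fact (eta k))
        * (\<Prod>l\<in>{1..N}-{k}. acoef N v l t ^ eta l / fact (eta l)))) (at t)"
    by (rule has_field_derivative_prod, rule DERIV_cdivide, rule DERIV_power, rule acoef_deriv_all)
       (use N in auto)
  then have "((\<lambda>s. gq N v s eta) has_real_derivative fact N * (\<Sum>k\<in>{1..N}. gT N v t eta k)) (at t)"
    unfolding gq_def gT_def by (rule DERIV_cmult)
  then show ?thesis by (rule has_field_derivative_at_within)
qed

lemma prod_remove3:
  assumes "finite A" "x \<in> A" "y \<in> A" "z \<in> A" "x \<noteq> y" "x \<noteq> z" "y \<noteq> z"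
  shows "prod f A = f x * (f y * (f z * prod f (A - {x} - {y} - {z})))"
  using assms by (simp add: prod.remove[of A x] prod.remove[of "A - {x}" y] prod.remove[of "A - {x} - {y}" z])

lemma prod_remove2:
  assumes "finite A" "x \<in> A" "y \<in> A" "x \<noteq> y"
  shows "prod f A = f x * (f y * prod f (A - {x} - {y}))"
  using assms by (simp add: prod.remove[of A x] prod.remove[of "A - {x}" y])

lemma alg1:
  fixes a1 aj aJ v X :: real
  shows "(real n1 + 1) * (real nj + 1) * (real j * v) *
     (a1 ^ Suc n1 / fact (Suc n1) * (aj ^ Suc nj / fact (Suc nj) * (aJ ^ m / fact m * X)))
   = real (Suc m) * (v * real j * a1 * aj * aJ ^ m) / fact (Suc m) * (a1 ^ n1 / fact n1 * (aj ^ nj / fact nj * X))"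
proof -
  have f: "fact (Suc n) = (real n + 1) * (fact n::real)" for n by simp
  have p: "(fact n1::real) > 0" "(fact nj::real) > 0" "(fact m::real) > 0" by auto
  have q: "real n1 + 1 > 0" "real nj + 1 > 0" "real m + 1 > 0" by auto
  show ?thesis unfolding f using p q by (simp add: divide_simps del: fact_Suc)
qed

lemma alg2:
  fixes a1 a2 v X :: real
  shows "(real n1 + 2) * (real n1 + 2 - 1) / 2 * (2 * v) *
     (a1 ^ Suc (Suc n1) / fact (Suc (Suc n1)) * (a2 ^ m / fact m * X))
   = real (Suc m) * (v * a1 * a1 * a2 ^ m) / fact (Suc m) * (a1 ^ n1 / fact n1 * X)"
proof -
  have f: "fact (Suc n) = (real n + 1) * (fact n::real)" for n by simp
  have p: "(fact n1::real) > 0" "(fact m::real) > 0" by auto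
  have q: "real n1 + 1 > 0" "real n1 + 2 > 0" "real m + 1 > 0" by auto
  show ?thesis unfolding f using p q by (simp add: divide_simps del: fact_Suc) (simp add: algebra_simps)
qed


lemma core:
  assumes eta: "eta \<in> partitions N" and N: "N \<ge> 2" and j: "1 \<le> j" and e: "1 \<le> eta (j + 1)"
  shows "trans_rate (psi_BD v) 1 j (xi0 j eta) * gq N v t (xi0 j eta) = fact N * gT N v t eta (j + 1)"
proof -
  have "eta (j + 1) \<noteq> 0" using e by simp
  then have jN: "j + 1 \<le> N" using partitions_supp[OF eta] by blast
  obtain m where m: "eta (j + 1) = Suc m" using e by (cases "eta (j + 1)") auto
  define a where "a = (\<lambda>l. acoef N v l t)"
  define g where "g = (\<lambda>l. a l ^ eta l / fact (eta l) :: real)"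
  define G where "G = (\<lambda>l. a l ^ xi0 j eta l / fact (xi0 j eta l) :: real)"
  have gqx: "gq N v t (xi0 j eta) = fact N * prod G {1..N}" unfolding gq_def G_def a_def ..
  have gTe: "gT N v t eta (j + 1) = real (Suc m) * (dA N v (j + 1) t * a (j + 1) ^ m) / fact (Suc m)
       * prod g ({1..N} - {j + 1})" unfolding gT_def g_def a_def m by simp
  have xo: "l \<noteq> 1 \<Longrightarrow> l \<noteq> j \<Longrightarrow> l \<noteq> j + 1 \<Longrightarrow> G l = g l" for l
    unfolding G_def g_def xi0_def by simp
  show ?thesis
  proof (cases "j = 1")
    case False
    then have j2: "j \<ge> 2" using j by simp
    have x1: "xi0 j eta 1 = Suc (eta 1)" using j2 unfolding xi0_def by simp
    have xj: "xi0 j eta j = Suc (eta j)" using j2 unfolding xi0_def by simp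
    have xJ: "xi0 j eta (j + 1) = m" using j2 m unfolding xi0_def by simp
    have tr: "trans_rate (psi_BD v) 1 j (xi0 j eta) = (real (eta 1) + 1) * (real (eta j) + 1) * (real j * v)"
      using j2 unfolding trans_rate_def psi_BD_def x1 xj by (simp add: algebra_simps)
    define R where "R = {1..N} - {1} - {j} - {j + 1}"
    have PG: "prod G {1..N} = G 1 * (G j * (G (j + 1) * prod G R))"
      unfolding R_def using j2 jN by (intro prod_remove3) auto
    have Pg: "prod g ({1..N} - {j + 1}) = g 1 * (g j * prod g R)"
    proof -
      have "prod g ({1..N} - {j + 1}) = g 1 * (g j * prod g ({1..N} - {j + 1} - {1} - {j}))"
        using j2 jN by (intro prod_remove2) auto
      also have "{1..N} - {j + 1} - {1} - {j} = R" unfolding R_def by auto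
      finally show ?thesis .
    qed
    have PR: "prod G R = prod g R" unfolding R_def by (rule prod.cong[OF refl]) (auto intro: xo)
    have dA: "dA N v (j + 1) t = v * real j * a 1 * a j" unfolding dA_def a_def using j by simp
    have "trans_rate (psi_BD v) 1 j (xi0 j eta) * gq N v t (xi0 j eta)
      = fact N * ((real (eta 1) + 1) * (real (eta j) + 1) * (real j * v) *
     (a 1 ^ Suc (eta 1) / fact (Suc (eta 1)) * (a j ^ Suc (eta j) / fact (Suc (eta j)) * (a (j + 1) ^ m / fact m * prod g R))))"
      unfolding tr gqx PG PR unfolding G_def x1 xj xJ by (simp only: mult_ac)
    also have "\<dots> = fact N * (real (Suc m) * (v * real j * a 1 * a j * a (j + 1) ^ m) / fact (Suc m) * (a 1 ^ eta 1 / fact (eta 1) * (a j ^ eta j / fact (eta j) * prod g R)))"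
      by (simp only: alg1)
    also have "\<dots> = fact N * gT N v t eta (j + 1)"
      unfolding gTe Pg dA unfolding g_def by simp
    finally show ?thesis .
  next
    case True
    have x1: "xi0 j eta 1 = Suc (Suc (eta 1))" using True unfolding xi0_def by simp
    have x2: "xi0 j eta 2 = m" using True m unfolding xi0_def by (simp add: numeral_2_eq_2)
    have tr: "trans_rate (psi_BD v) 1 j (xi0 j eta) = (real (eta 1) + 2) * (real (eta 1) + 2 - 1) / 2 * (2 * v)"
      using True unfolding trans_rate_def psi_BD_def x1 by simp
    define R where "R = {1..N} - {1} - {2}"
    have PG: "prod G {1..N} = G 1 * (G 2 * prod G R)"
      unfolding R_def using jN True by (intro prod_remove2) auto
    have Pg: "prod g ({1..N} - {2}) = g 1 * prod g R"
    proof -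
      have "prod g ({1..N} - {2}) = g 1 * prod g ({1..N} - {2} - {1})"
        using jN True by (intro prod.remove) auto
      also have "{1..N} - {2} - {1} = R" unfolding R_def by auto
      finally show ?thesis .
    qed
    have PR: "prod G R = prod g R" unfolding R_def using True by (intro prod.cong[OF refl] xo) auto
    have dA: "dA N v 2 t = v * a 1 * a 1" unfolding dA_def a_def by simp
    have e2: "j + 1 = 2" using True by simp
    have "trans_rate (psi_BD v) 1 j (xi0 j eta) * gq N v t (xi0 j eta)
      = fact N * ((real (eta 1) + 2) * (real (eta 1) + 2 - 1) / 2 * (2 * v) *
     (a 1 ^ Suc (Suc (eta 1)) / fact (Suc (Suc (eta 1))) * (a 2 ^ m / fact m * prod g R)))"
      unfolding tr gqx PG PR unfolding G_def x1 x2 by (simp only: mult_ac)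
    also have "\<dots> = fact N * (real (Suc m) * (v * a 1 * a 1 * a 2 ^ m) / fact (Suc m) * (a 1 ^ eta 1 / fact (eta 1) * prod g R))"
      by (simp only: alg2)
    also have "\<dots> = fact N * gT N v t eta (j + 1)"
      unfolding gTe unfolding e2 Pg dA unfolding g_def by simp
    finally show ?thesis .
  qed
qed


lemma gT_1:
  assumes N: "N \<ge> 2"
  shows "fact N * gT N v t eta 1 = - (v * real (eta 1) * (real N - 1)) * gq N v t eta"
proof -
  define a where "a = (\<lambda>l. acoef N v l t)"
  define g where "g = (\<lambda>l. a l ^ eta l / fact (eta l) :: real)"
  have q: "gq N v t eta = fact N * (g 1 * prod g ({1..N} - {1}))"
    unfolding gq_def g_def a_def using N by (subst prod.remove[of _ 1]) auto
  have p: "real (eta 1) * (a 1 * a 1 ^ (eta 1 - Suc 0)) = real (eta 1) * a 1 ^ eta 1"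
    by (cases "eta 1") auto
  have "gT N v t eta 1 = (- (real N - 1) * v) * (real (eta 1) * (a 1 * a 1 ^ (eta 1 - Suc 0))) / fact (eta 1) * prod g ({1..N} - {1})"
    unfolding gT_def dA_def g_def a_def by (simp add: algebra_simps)
  also have "\<dots> = - (v * real (eta 1) * (real N - 1)) * (g 1 * prod g ({1..N} - {1}))"
    unfolding p unfolding g_def by (simp add: algebra_simps)
  finally show ?thesis unfolding q by simp
qed

lemma gq_rhs:
  assumes eta: "eta \<in> partitions N" and N: "N \<ge> 2" and v: "v > 0"
  shows "forward_rhs N (psi_BD v) (gq N v t) eta = fact N * (\<Sum>k\<in>{1..N}. gT N v t eta k)"
proof -
  define q where "q = gq N v t"
  define h where "h = (\<lambda>xi i j. if merge i j xi = eta then trans_rate (psi_BD v) i j xi * q xi else 0)"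
  define I where "I = (\<lambda>j. \<Sum>xi\<in>partitions N. h xi 1 j)"
  have in1: "(\<Sum>xi\<in>partitions N. \<Sum>i\<in>{1..N}. \<Sum>j\<in>{i..N}. h xi i j)
      = (\<Sum>i\<in>{1..N}. \<Sum>j\<in>{i..N}. \<Sum>xi\<in>partitions N. h xi i j)"
    by (subst sum.swap) (rule sum.cong[OF refl], rule sum.swap)
  also have "\<dots> = (\<Sum>j\<in>{1..N}. I j) + (\<Sum>i\<in>{Suc 1..N}. \<Sum>j\<in>{i..N}. \<Sum>xi\<in>partitions N. h xi i j)"
    unfolding I_def using N by (subst sum.atLeast_Suc_atMost) auto
  also have "(\<Sum>i\<in>{Suc 1..N}. \<Sum>j\<in>{i..N}. \<Sum>xi\<in>partitions N. h xi i j) = 0"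
    unfolding h_def by (intro sum.neutral ballI) (auto simp: trans_rate_zero)
  finally have inflow: "(\<Sum>xi\<in>partitions N. \<Sum>i\<in>{1..N}. \<Sum>j\<in>{i..N}. h xi i j) = (\<Sum>j\<in>{1..N}. I j)"
    by simp
  have Ij: "I j = fact N * gT N v t eta (j + 1)" if j: "1 \<le> j" for j
  proof -
    have "I j = (if 1 \<le> eta (j + 1) then trans_rate (psi_BD v) 1 j (xi0 j eta) * q (xi0 j eta) else 0)"
      unfolding I_def h_def by (rule inflow_j[OF eta j v])
    also have "\<dots> = fact N * gT N v t eta (j + 1)"
    proof (cases "1 \<le> eta (j + 1)")
      case True then show ?thesis unfolding q_def using core[OF eta N j True] by simp
    next
      case False then show ?thesis by (simp add: gT_def)
    qed
    finally show ?thesis .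
  qed
  have IN: "I N = 0"
  proof -
    have "eta (N + 1) = 0" using partitions_supp[OF eta, of "N + 1"] by auto
    then show ?thesis using Ij[of N] N unfolding gT_def by simp
  qed
  obtain M where M: "N = Suc M" using N by (cases N) auto
  have sI: "(\<Sum>j\<in>{1..N}. I j) = fact N * (\<Sum>j\<in>{1..M}. gT N v t eta (Suc j))"
  proof -
    have "(\<Sum>j\<in>{1..N}. I j) = (\<Sum>j\<in>{1..M}. I j) + I N" unfolding M by (subst sum.cl_ivl_Suc) auto
    also have "\<dots> = (\<Sum>j\<in>{1..M}. fact N * gT N v t eta (Suc j))" unfolding IN
      by (simp add: Ij)
    finally show ?thesis by (simp add: sum_distrib_left)
  qed
  have sT: "(\<Sum>k\<in>{1..N}. gT N v t eta k) = gT N v t eta 1 + (\<Sum>j\<in>{1..M}. gT N v t eta (Suc j))"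
  proof -
    have "(\<Sum>k\<in>{1..N}. gT N v t eta k) = gT N v t eta 1 + (\<Sum>k\<in>{Suc 1..Suc M}. gT N v t eta k)"
      unfolding M by (subst sum.atLeast_Suc_atMost) auto
    also have "(\<Sum>k\<in>{Suc 1..Suc M}. gT N v t eta k) = (\<Sum>j\<in>{1..M}. gT N v t eta (Suc j))"
      by (rule sum.shift_bounds_cl_Suc_ivl)
    finally show ?thesis .
  qed
  have "forward_rhs N (psi_BD v) (gq N v t) eta
      = (\<Sum>j\<in>{1..N}. I j) - v * real (eta 1) * (real N - 1) * q eta"
    unfolding forward_rhs_def outflow[OF eta N] inflow[unfolded h_def, symmetric] q_def ..
  also have "\<dots> = fact N * (\<Sum>k\<in>{1..N}. gT N v t eta k)"
    unfolding sI sT q_def using gT_1[OF N, of v t eta] by (simp add: algebra_simps)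
  finally show ?thesis .
qed

lemma gq_solves:
  assumes eta: "eta \<in> partitions N" and N: "N \<ge> 2" and v: "v > 0"
  shows "((\<lambda>s. gq N v s eta) has_real_derivative forward_rhs N (psi_BD v) (gq N v t) eta) (at t within S)"
  unfolding gq_rhs[OF eta N v] by (rule gq_deriv[OF N])

lemma gq_init:
  assumes eta: "eta \<in> partitions N" and N: "N \<ge> 2"
  shows "gq N v 0 eta = (if eta = (\<lambda>k. if k = 1 then N else 0) then 1 else 0)"
proof (cases "\<forall>k\<in>{2..N}. eta k = 0")
  case True
  note allz = True
  have e1: "eta 1 = N"
  proof -
    have "(\<Sum>k=1..N. k * eta k) = 1 * eta 1 + (\<Sum>k=Suc 1..N. k * eta k)"
      using N by (subst sum.atLeast_Suc_atMost) auto
    also have "(\<Sum>k=Suc 1..N. k * eta k) = 0" using allz by (intro sum.neutral ballI) simp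
    finally show ?thesis using partitions_sum[OF eta] by simp
  qed
  have ee: "eta = (\<lambda>k. if k = 1 then N else 0)"
  proof
    fix k show "eta k = (if k = 1 then N else 0)"
    proof (cases "k = 1")
      case True with e1 show ?thesis by simp
    next
      case False
      show ?thesis
      proof (rule ccontr)
        assume "eta k \<noteq> (if k = 1 then N else 0)"
        then have nz: "eta k \<noteq> 0" using False by simp
        then have "1 \<le> k \<and> k \<le> N" by (rule partitions_supp[OF eta])
        then have "k \<in> {2..N}" using False by auto
        from bspec[OF allz this] nz show False by simp
      qed
    qed
  qed
  have r: "(\<Prod>k\<in>{1..N} - {1}. acoef N v k 0 ^ eta k / fact (eta k)) = 1"
  proof (rule prod.neutral, rule ballI)
    fix k assume "k \<in> {1..N} - {1}"
    then have "k \<in> {2..N}" by auto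
    then have "eta k = 0" using allz by blast
    then show "acoef N v k 0 ^ eta k / fact (eta k) = 1" by simp
  qed
  have "gq N v 0 eta = fact N * (acoef N v 1 0 ^ eta 1 / fact (eta 1) * (\<Prod>k\<in>{1..N} - {1}. acoef N v k 0 ^ eta k / fact (eta k)))"
    unfolding gq_def using N by (subst prod.remove[of _ 1]) auto
  also have "\<dots> = 1" unfolding r e1 acoef_1 by simp
  finally show ?thesis using ee by simp
next
  case False
  then obtain k where k: "k \<in> {2..N}" "eta k \<noteq> 0" by blast
  have "gq N v 0 eta = fact N * (acoef N v k 0 ^ eta k / fact (eta k) * (\<Prod>l\<in>{1..N} - {k}. acoef N v l 0 ^ eta l / fact (eta l)))"
    unfolding gq_def using k by (subst prod.remove[of _ k]) auto
  also have "acoef N v k 0 = 0" using acoef_0[OF N, of k v] k by simp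
  finally have z: "gq N v 0 eta = 0" using k by simp
  have "eta \<noteq> (\<lambda>k. if k = 1 then N else 0)"
  proof
    assume "eta = (\<lambda>k. if k = 1 then N else 0)"
    then have "eta k = 0" using k by auto
    then show False using k by simp
  qed
  then show ?thesis using z by simp
qed




lemma prod_ineq:
  fixes c K a b :: real
  assumes "\<bar>c\<bar> \<le> K"
  shows "c * (a * b) \<le> K * (a^2 + b^2) / 2"
proof -
  have 1: "c * (a * b) \<le> \<bar>c\<bar> * \<bar>a * b\<bar>" by (metis abs_ge_self abs_mult)
  have 2: "\<bar>c\<bar> * \<bar>a * b\<bar> \<le> K * \<bar>a * b\<bar>" using assms by (intro mult_right_mono) auto
  have "(\<bar>a\<bar> - \<bar>b\<bar>)^2 = \<bar>a\<bar>^2 + \<bar>b\<bar>^2 - 2 * \<bar>a\<bar> * \<bar>b\<bar>" by (rule power2_diff)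
  moreover have "0 \<le> (\<bar>a\<bar> - \<bar>b\<bar>)^2" by (rule zero_le_power2)
  ultimately have h: "\<bar>a * b\<bar> \<le> (a^2 + b^2) / 2" by (simp add: abs_mult)
  have K: "K \<ge> 0" using assms by linarith
  have 3: "K * \<bar>a * b\<bar> \<le> K * ((a^2 + b^2) / 2)" using mult_left_mono[OF h K] .
  show ?thesis using 1 2 3 by linarith
qed

lemma uniq:
  fixes p q :: "real \<Rightarrow> 'a \<Rightarrow> real" and P :: "'a set" and C :: "'a \<Rightarrow> 'a \<Rightarrow> real"
  assumes fin: "finite P"
    and init: "\<forall>eta\<in>P. p 0 eta = q 0 eta"
    and dp: "\<forall>eta\<in>P. \<forall>t\<ge>0. ((\<lambda>s. p s eta) has_real_derivative (\<Sum>xi\<in>P. C eta xi * p t xi)) (at t within {0..})"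
    and dq: "\<forall>eta\<in>P. \<forall>t\<ge>0. ((\<lambda>s. q s eta) has_real_derivative (\<Sum>xi\<in>P. C eta xi * q t xi)) (at t within {0..})"
  shows "\<forall>t\<ge>0. \<forall>eta\<in>P. p t eta = q t eta"
proof -
  define d where "d = (\<lambda>t eta. p t eta - q t eta)"
  define E where "E = (\<lambda>t. \<Sum>eta\<in>P. (d t eta)^2)"
  define K where "K = (\<Sum>eta\<in>P. \<Sum>xi\<in>P. \<bar>C eta xi\<bar>)"
  define L where "L = 2 * K * real (card P)"
  have CK: "\<bar>C eta xi\<bar> \<le> K" if "eta \<in> P" "xi \<in> P" for eta xi
  proof -
    have "\<bar>C eta xi\<bar> \<le> (\<Sum>xi\<in>P. \<bar>C eta xi\<bar>)" using fin that by (intro member_le_sum) auto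
    also have "\<dots> \<le> K" unfolding K_def using fin that
      by (intro member_le_sum[of _ _ "\<lambda>eta. \<Sum>xi\<in>P. \<bar>C eta xi\<bar>"]) (auto intro: sum_nonneg)
    finally show ?thesis .
  qed
  have dd: "((\<lambda>s. d s eta) has_real_derivative (\<Sum>xi\<in>P. C eta xi * d t xi)) (at t within {0..})"
    if "eta \<in> P" "t \<ge> 0" for eta t
  proof -
    have "((\<lambda>s. d s eta) has_real_derivative (\<Sum>xi\<in>P. C eta xi * p t xi) - (\<Sum>xi\<in>P. C eta xi * q t xi)) (at t within {0..})"
      unfolding d_def using dp dq that by (intro DERIV_diff) auto
    then show ?thesis by (simp add: d_def sum_subtractf right_diff_distrib)
  qed
  define E' where "E' = (\<lambda>t. \<Sum>eta\<in>P. 2 * d t eta * (\<Sum>xi\<in>P. C eta xi * d t xi))"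
  have dE: "(E has_real_derivative E' t) (at t within {0..})" if "t \<ge> 0" for t
    unfolding E_def E'_def
    by (rule DERIV_sum, rule DERIV_power[THEN DERIV_cong], rule dd) (use that in auto)
  have E'le: "E' t \<le> L * E t" for t
  proof -
    define A where "A = (\<Sum>eta\<in>P. \<Sum>xi\<in>P. (d t eta)^2)"
    define B where "B = (\<Sum>eta\<in>P. \<Sum>xi\<in>P. (d t xi)^2)"
    have s1: "E' t = 2 * (\<Sum>eta\<in>P. \<Sum>xi\<in>P. C eta xi * (d t eta * d t xi))"
      unfolding E'_def sum_distrib_left by (intro sum.cong refl) (simp add: algebra_simps)
    have s2: "(\<Sum>eta\<in>P. \<Sum>xi\<in>P. C eta xi * (d t eta * d t xi)) \<le> (\<Sum>eta\<in>P. \<Sum>xi\<in>P. K * ((d t eta)^2 + (d t xi)^2) / 2)"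
      using CK by (intro sum_mono prod_ineq) auto
    have s3: "(\<Sum>eta\<in>P. \<Sum>xi\<in>P. K * ((d t eta)^2 + (d t xi)^2) / 2) = K / 2 * A + K / 2 * B"
    proof -
      have "(\<Sum>eta\<in>P. \<Sum>xi\<in>P. K * ((d t eta)^2 + (d t xi)^2) / 2)
          = (\<Sum>eta\<in>P. \<Sum>xi\<in>P. K / 2 * (d t eta)^2 + K / 2 * (d t xi)^2)"
        by (intro sum.cong refl) (simp add: field_simps)
      also have "\<dots> = K / 2 * A + K / 2 * B" unfolding A_def B_def by (simp only: sum.distrib sum_distrib_left)
      finally show ?thesis .
    qed
    have sA: "A = real (card P) * E t" unfolding A_def E_def by (simp add: sum_distrib_left)
    have sB: "B = real (card P) * E t" unfolding B_def E_def by simp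
    have "E' t \<le> 2 * (K / 2 * A + K / 2 * B)" unfolding s1 using s2 unfolding s3 by simp
    also have "\<dots> = L * E t" unfolding sA sB L_def by (simp add: algebra_simps)
    finally show ?thesis .
  qed
  define F where "F = (\<lambda>t. E t * exp (- L * t))"
  have dF: "(F has_real_derivative (E' t * exp (- L * t) - L * (E t * exp (- L * t)))) (at t within {0..})"
    if "t \<ge> 0" for t
    unfolding F_def
    by (rule DERIV_mult[OF dE[OF that], THEN DERIV_cong]) (auto intro!: derivative_eq_intros simp: algebra_simps)
  have dFle: "E' t * exp (- L * t) - L * (E t * exp (- L * t)) \<le> 0" for t
    using E'le[of t] by (simp add: algebra_simps mult_right_mono)
  have F0: "F 0 = 0" unfolding F_def E_def d_def using init by simp
  have Fnn: "F t \<ge> 0" for t unfolding F_def E_def by (intro mult_nonneg_nonneg sum_nonneg) auto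
  have Fz: "F t = 0" if t: "t \<ge> 0" for t
  proof (cases "t = 0")
    case True then show ?thesis using F0 by simp
  next
    case False
    then have tp: "t > 0" using t by simp
    have cont: "continuous_on {0..t} F"
    proof -
      have "continuous (at x within {0..}) F" if "x \<in> {0..t}" for x
        using dF[of x] that by (intro DERIV_continuous) auto
      then show ?thesis unfolding continuous_on_eq_continuous_within
        by (meson atLeastAtMost_iff atLeast_iff continuous_within_subset subsetI)
    qed
    have "F 0 \<ge> F t"
    proof (rule DERIV_nonpos_imp_decreasing_open[OF _ _ cont])
      show "0 \<le> t" using t .
      fix x :: real assume x: "0 < x" "x < t"
      have "at x within {0..} = at x" by (rule at_within_interior) (use x in simp)
      then have "(F has_real_derivative (E' x * exp (- L * x) - L * (E x * exp (- L * x)))) (at x)"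
        using dF[of x] x by simp
      then show "\<exists>y. (F has_real_derivative y) (at x) \<and> y \<le> 0" using dFle by blast
    qed
    then show ?thesis using F0 Fnn[of t] by simp
  qed
  show ?thesis
  proof (intro allI impI ballI)
    fix t :: real and eta assume t: "t \<ge> 0" and eta: "eta \<in> P"
    have "E t = 0" using Fz[OF t] unfolding F_def by simp
    then have "\<forall>e\<in>P. (d t e)^2 = 0" unfolding E_def using fin by (subst (asm) sum_nonneg_eq_0_iff) auto
    then show "p t eta = q t eta" using eta unfolding d_def by simp
  qed
qed




definition Cc :: "nat \<Rightarrow> (nat \<Rightarrow> nat \<Rightarrow> real) \<Rightarrow> (nat \<Rightarrow> nat) \<Rightarrow> (nat \<Rightarrow> nat) \<Rightarrow> real" where
  "Cc N psi eta xi = (\<Sum>i\<in>{1..N}. \<Sum>j\<in>{i..N}. if merge i j xi = eta then trans_rate psi i j xi else 0)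
     - (if xi = eta then (\<Sum>i\<in>{1..N}. \<Sum>j\<in>{i..N}. trans_rate psi i j eta) else 0)"

lemma fr_linear:
  assumes eta: "eta \<in> partitions N"
  shows "forward_rhs N psi f eta = (\<Sum>xi\<in>partitions N. Cc N psi eta xi * f xi)"
proof -
  have a: "(\<Sum>xi\<in>partitions N. (\<Sum>i\<in>{1..N}. \<Sum>j\<in>{i..N}. if merge i j xi = eta then trans_rate psi i j xi else 0) * f xi)
      = (\<Sum>xi\<in>partitions N. \<Sum>i\<in>{1..N}. \<Sum>j\<in>{i..N}. if merge i j xi = eta then trans_rate psi i j xi * f xi else 0)"
    unfolding sum_distrib_right by (intro sum.cong refl) simp
  have b: "(\<Sum>xi\<in>partitions N. (if xi = eta then (\<Sum>i\<in>{1..N}. \<Sum>j\<in>{i..N}. trans_rate psi i j eta) else 0) * f xi)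
      = (\<Sum>i\<in>{1..N}. \<Sum>j\<in>{i..N}. trans_rate psi i j eta) * f eta"
  proof -
    have "(\<Sum>xi\<in>partitions N. (if xi = eta then (\<Sum>i\<in>{1..N}. \<Sum>j\<in>{i..N}. trans_rate psi i j eta) else 0) * f xi)
       = (\<Sum>xi\<in>partitions N. if xi = eta then (\<Sum>i\<in>{1..N}. \<Sum>j\<in>{i..N}. trans_rate psi i j eta) * f xi else 0)"
      by (intro sum.cong) auto
    also have "\<dots> = (\<Sum>i\<in>{1..N}. \<Sum>j\<in>{i..N}. trans_rate psi i j eta) * f eta"
      using finite_partitions[of N] eta by (simp add: sum.delta)
    finally show ?thesis .
  qed
  show ?thesis unfolding forward_rhs_def Cc_def left_diff_distrib sum_subtractf a b ..
qed


theorem mainTheorem8: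
  fixes v :: real and N :: nat and p :: "real \<Rightarrow> (nat \<Rightarrow> nat) \<Rightarrow> real"
  assumes "v > 0" and "N \<ge> 2"
    and "is_CP_law N (psi_BD v) p"
  shows "(\<forall>t\<ge>0. \<forall>eta\<in>partitions N.
            p t eta = fact N * (\<Prod>k=1..N. acoef N v k t ^ eta k / fact (eta k)))
       \<and> mcoef N 0 1 = 0 \<and> mcoef N 1 1 = 1
       \<and> (\<forall>k\<ge>2. \<forall>i. 1 \<le> i \<and> i \<le> k \<longrightarrow>
            mcoef N i k = - (real (k - 1) * mcoef N (i - 1) (k - 1)) / (real i * (real N - 1)))
       \<and> (\<forall>k\<ge>2. mcoef N 0 k = - (\<Sum>i=1..k. mcoef N i k))"
proof -
  note v = assms(1) and N = assms(2)
  have law0: "\<forall>eta\<in>partitions N. p 0 eta = (if eta = (\<lambda>k. if k = 1 then N else 0) then 1 else 0)"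
    and lawd: "\<forall>eta\<in>partitions N. \<forall>t\<ge>0.
        ((\<lambda>s. p s eta) has_real_derivative forward_rhs N (psi_BD v) (p t) eta) (at t within {0..})"
    using assms(3) unfolding is_CP_law_def by auto
  have U: "\<forall>t\<ge>0. \<forall>eta\<in>partitions N. p t eta = gq N v t eta"
  proof (rule uniq[where C = "Cc N (psi_BD v)"])
    show "finite (partitions N)" by (rule finite_partitions)
    show "\<forall>eta\<in>partitions N. p 0 eta = gq N v 0 eta" using law0 gq_init[OF _ N] by simp
    show "\<forall>eta\<in>partitions N. \<forall>t\<ge>0. ((\<lambda>s. p s eta) has_real_derivative
        (\<Sum>xi\<in>partitions N. Cc N (psi_BD v) eta xi * p t xi)) (at t within {0..})"
      using lawd fr_linear by simp
    show "\<forall>eta\<in>partitions N. \<forall>t\<ge>0. ((\<lambda>s. gq N v s eta) has_real_derivative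
        (\<Sum>xi\<in>partitions N. Cc N (psi_BD v) eta xi * gq N v t xi)) (at t within {0..})"
      using gq_solves[OF _ N v] fr_linear by metis
  qed
  have A: "\<forall>t\<ge>0. \<forall>eta\<in>partitions N.
            p t eta = fact N * (\<Prod>k=1..N. acoef N v k t ^ eta k / fact (eta k))"
    using U unfolding gq_def by blast
  have B: "mcoef N 0 1 = 0" "mcoef N 1 1 = 1" by (simp_all add: mcoef_def)
  have C: "\<forall>k\<ge>2. \<forall>i. 1 \<le> i \<and> i \<le> k \<longrightarrow>
            mcoef N i k = - (real (k - 1) * mcoef N (i - 1) (k - 1)) / (real i * (real N - 1))"
    using mcoef_rec[OF N] by blast
  have D: "\<forall>k\<ge>2. mcoef N 0 k = - (\<Sum>i=1..k. mcoef N i k)"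
  proof (intro allI impI)
    fix k :: nat assume k: "k \<ge> 2"
    have "(\<Sum>i=0..k. mcoef N i k) = mcoef N 0 k + (\<Sum>i=Suc 0..k. mcoef N i k)"
      by (subst sum.atLeast_Suc_atMost) auto
    then show "mcoef N 0 k = - (\<Sum>i=1..k. mcoef N i k)" using mcoef_sum0[OF N k] by simp
  qed
  show ?thesis using A B C D by blast
qed


end
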